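(* Let $(A,f)$ be a finite-dimensional abelian quadratic Lie algebra over a field $\mathbb{K}$ of characteristic zero, let $d$ be an $f$-skew-symmetric derivation of $A$, and let $(A_b,f_b)$ be the one-dimensional double extension of $(A,f)$ by $(b,d)$. Then $A_b$ is $2$-step nilpotent if and only if $d\neq 0$ and $d^2=0$.
   Context: A quadratic Lie algebra $(A,f)$ is a Lie algebra with a non-degenerate symmetric invariant bilinear form $f$ (invariance: $f([x,y],z)+f(y,[x,z])=0$); here $A$ is abelian so every linear map is a derivation. A linear map $d$ is $f$-skew-symmetric if $f(d(x),y)+f(x,d(y))=0$. The one-dimensional double extension of $(A,f)$ by $(b,d)$ is $A_b=\mathbb{K}b\oplus A\oplus\mathbb{K}\beta$ with bracket $[\lambda b+a+\mu\beta,\lambda' b+a'+\mu'\beta]=\lambda d(a')-\lambda' d(a)+[a,a']_A+f(d(a),a')\beta$ and form $f_b(\lambda b+a+\mu\beta,\lambda' b+a'+\mu'\beta)=\lambda\mu'+\lambda'\mu+f(a,a')$. $2$-step nilpotent means $[L,[L,L]]=0\neq[L,L]$. *)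

theory Defs
  imports Complex_Main "HOL-Library.Product_Plus"
begin

text \<open>The one-dimensional double extension A_b = K b + A + K beta of an abelian
 quadratic Lie algebra (A,f) by (b,d). Elements lambda b + a + mu beta are
 represented as triples (lambda, a, mu).\<close>

definition dext_scale :: "('k::field \<Rightarrow> 'v \<Rightarrow> 'v) \<Rightarrow> 'k \<Rightarrow> 'k \<times> 'v \<times> 'k \<Rightarrow> 'k \<times> 'v \<times> 'k"
  where "dext_scale scale c x = (case x of (l, a, m) \<Rightarrow> (c * l, scale c a, c * m))"

text \<open>Bracket of A_b; the bracket of A is zero since A is abelian.\<close>
definition dext_bracket ::
  "('k::field \<Rightarrow> 'v::ab_group_add \<Rightarrow> 'v) \<Rightarrow> ('v \<Rightarrow> 'v \<Rightarrow> 'k) \<Rightarrow> ('v \<Rightarrow> 'v)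
   \<Rightarrow> 'k \<times> 'v \<times> 'k \<Rightarrow> 'k \<times> 'v \<times> 'k \<Rightarrow> 'k \<times> 'v \<times> 'k"
  where "dext_bracket scale f d x y =
    (case x of (l, a, m) \<Rightarrow> case y of (l', a', m') \<Rightarrow>
      (0, scale l (d a') - scale l' (d a), f (d a) a'))"

definition dext_comm ::
  "('k::field \<Rightarrow> 'v::ab_group_add \<Rightarrow> 'v) \<Rightarrow> ('v \<Rightarrow> 'v \<Rightarrow> 'k) \<Rightarrow> ('v \<Rightarrow> 'v)
   \<Rightarrow> ('k \<times> 'v \<times> 'k) set \<Rightarrow> ('k \<times> 'v \<times> 'k) set \<Rightarrow> ('k \<times> 'v \<times> 'k) set"
  where "dext_comm scale f d S T =
    module.span (dext_scale scale) {dext_bracket scale f d x y | x y. x \<in> S \<and> y \<in> T}"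

definition dext_two_step_nilpotent ::
  "('k::field \<Rightarrow> 'v::ab_group_add \<Rightarrow> 'v) \<Rightarrow> ('v \<Rightarrow> 'v \<Rightarrow> 'k) \<Rightarrow> ('v \<Rightarrow> 'v) \<Rightarrow> bool"
  where "dext_two_step_nilpotent scale f d \<longleftrightarrow>
    dext_comm scale f d UNIV (dext_comm scale f d UNIV UNIV) = {(0, 0, 0)}
    \<and> dext_comm scale f d UNIV UNIV \<noteq> {(0, 0, 0)}"

end

theory Submission
  imports Defs
begin

lemma dext_module:
  assumes "vector_space scale"
  shows "module (dext_scale scale)"
proof -
  interpret V: vector_space scale by fact
  show ?thesis
    by unfold_locales
      (auto simp: dext_scale_def algebra_simps V.scale_right_distrib V.scale_left_distrib split: prod.splits)
qed

theorem corollary2p11: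
  fixes scale :: "'k::field_char_0 \<Rightarrow> 'v::ab_group_add \<Rightarrow> 'v"
    and B :: "'v set"
    and f :: "'v \<Rightarrow> 'v \<Rightarrow> 'k"
    and d :: "'v \<Rightarrow> 'v"
  assumes fin: "finite_dimensional_vector_space scale B"
    and f_lin: "\<And>x. Vector_Spaces.linear scale (*) (f x)"
    and f_sym: "\<And>x y. f x y = f y x"
    and f_nondeg: "\<And>x. (\<forall>y. f x y = 0) \<Longrightarrow> x = 0"
    and d_lin: "Vector_Spaces.linear scale scale d"
    and d_skew: "\<And>x y. f (d x) y + f x (d y) = 0"
  shows "dext_two_step_nilpotent scale f d \<longleftrightarrow> d \<noteq> (\<lambda>_. 0) \<and> d \<circ> d = (\<lambda>_. 0)"
proof -
  interpret V: vector_space scale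
    using fin by (simp add: finite_dimensional_vector_space_def)
  interpret M: module "dext_scale scale"
    by (rule dext_module) (rule V.vector_space_axioms)
  have f0: "f x 0 = 0" for x
    using f_lin[of x] by (simp add: Vector_Spaces.linear_def module_hom_def module_hom_axioms_def)
      (metis add_cancel_right_left V.scale_zero_left mult_zero_left)
  have f0': "f 0 x = 0" for x using f0 f_sym by metis
  interpret L: Vector_Spaces.linear scale scale d by (rule d_lin)
  have d0: "d 0 = 0" by (rule L.zero)
  have dadd: "d (x - y) = d x - d y" for x y by (rule L.diff)
  have dscale: "d (scale c x) = scale c (d x)" for c x by (rule L.scale)
  have span0: "M.span S = {(0,0,0)}" if "S \<subseteq> {(0,0,0)}" for S
  proof -
    have "M.subspace {(0,0,0)}"
      by (auto simp: M.subspace_def dext_scale_def V.scale_zero_right zero_prod_def)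
    then have "M.span S \<subseteq> {(0,0,0)}" using that by (intro M.span_minimal)
    moreover have "(0,0,0) \<in> M.span S" using M.span_zero by (simp add: zero_prod_def)
    ultimately show ?thesis by blast
  qed
  have br: "dext_bracket scale f d (1,0,0) (0,v,0) = (0, d v, 0)" for v
    by (simp add: dext_bracket_def d0 f0' V.scale_zero_left)
  let ?LL = "dext_comm scale f d UNIV UNIV"
  have inLL: "(0, d v, 0) \<in> ?LL" for v
    unfolding dext_comm_def by (rule M.span_base) (use br[of v, symmetric] in blast)
  show ?thesis
  proof
    assume H: "dext_two_step_nilpotent scale f d"
    have dn: "d \<noteq> (\<lambda>_. 0)"
    proof
      assume "d = (\<lambda>_. 0)"
      then have "?LL = {(0,0,0)}" unfolding dext_comm_def
        by (intro span0) (auto simp: dext_bracket_def f0' V.scale_zero_right split: prod.splits)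
      with H show False by (simp add: dext_two_step_nilpotent_def)
    qed
    have "d (d v) = 0" for v
    proof -
      have "(0, d (d v), 0) \<in> dext_comm scale f d UNIV ?LL"
        unfolding dext_comm_def
        by (rule M.span_base) (use br[of "d v", symmetric] inLL[of v, unfolded dext_comm_def] in blast)
      with H show ?thesis by (simp add: dext_two_step_nilpotent_def)
    qed
    with dn show "d \<noteq> (\<lambda>_. 0) \<and> d \<circ> d = (\<lambda>_. 0)" by auto
  next
    assume H: "d \<noteq> (\<lambda>_. 0) \<and> d \<circ> d = (\<lambda>_. 0)"
    then have dd: "d (d v) = 0" for v by (metis comp_apply)
    obtain v where v: "d v \<noteq> 0" using H by auto
    have ne: "?LL \<noteq> {(0,0,0)}" using inLL[of v] v by auto
    let ?P = "{y. fst y = 0 \<and> d (fst (snd y)) = 0}"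
    have sub: "M.subspace ?P"
      unfolding M.subspace_def
      by (auto simp: zero_prod_def dext_scale_def L.add dscale d0 V.scale_zero_right split: prod.splits)
    have genP: "dext_bracket scale f d x y \<in> ?P" for x y
      by (cases x, cases y) (simp add: dext_bracket_def dadd dscale dd V.scale_zero_right)
    have "?LL \<subseteq> ?P"
      unfolding dext_comm_def
      by (intro M.span_minimal sub) (use genP in blast)
    have gen0: "dext_bracket scale f d x y = (0,0,0)" if yP: "y \<in> ?P" for x y
    proof -
      obtain l a m where x: "x = (l,a,m)" by (cases x) auto
      obtain w m' where y: "y = (0,w,m')" and w: "d w = 0" using yP by (metis (mono_tags, lifting) mem_Collect_eq prod.collapse)
      have "f (d a) w = 0" using d_skew[of a w] w f0 by simp
      then show ?thesis by (simp add: x y w dext_bracket_def V.scale_zero_left V.scale_zero_right)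
    qed
    have "dext_comm scale f d UNIV ?LL = {(0,0,0)}"
      unfolding dext_comm_def[of _ _ _ UNIV ?LL]
      by (rule span0) (use gen0 \<open>?LL \<subseteq> ?P\<close> in blast)
    with ne show "dext_two_step_nilpotent scale f d" by (simp add: dext_two_step_nilpotent_def)
  qed
qed

end
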